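(* Let $\mathcal H$ be a Hilbert space with $\dim\mathcal H<\infty$ and $T:\mathcal B_*(\mathcal H)\to\mathcal B_*(\mathcal H)$ a channel. Then $$\|T-\mathrm{id}\|\le 4\sup_{\psi\in\mathcal H,\ \|\psi\|=1}\sqrt{1-\langle\psi|T(|\psi\rangle\langle\psi|)|\psi\rangle}.$$
   Context: For a Hilbert space $\mathcal H$, $\mathcal B_*(\mathcal H)$ denotes the trace-class operators on $\mathcal H$ with the trace norm $\|A\|_1=\operatorname{tr}\sqrt{A^*A}$. A channel is a completely positive trace-preserving linear map (Schrödinger picture). For a linear map $X:\mathcal B_*(\mathcal H)\to\mathcal B_*(\mathcal H)$, $\|X\|=\sup_{\|\rho\|_1\le1}\|X(\rho)\|_1$; $\mathrm{id}$ is the identity map. *)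

theory Defs
  imports "HOL-Analysis.Analysis"
begin

text \<open>Finite-dimensional Hilbert space H = complex^'n (dimension CARD('n), arbitrary
  finite type). Operators on H (all of which are trace class) are complex^'n^'n.\<close>

definition cinner_vec :: "complex^'n \<Rightarrow> complex^'n \<Rightarrow> complex" where
  "cinner_vec u v = (\<Sum>i\<in>UNIV. cnj (u$i) * v$i)"

definition adj_mat :: "complex^'n^'n \<Rightarrow> complex^'n^'n" where
  "adj_mat A = (\<chi> i j. cnj (A$j$i))"

definition psd_mat :: "complex^'n^'n \<Rightarrow> bool" where
  "psd_mat A \<longleftrightarrow> (\<forall>v. Im (cinner_vec v (A *v v)) = 0 \<and> 0 \<le> Re (cinner_vec v (A *v v)))"

definition psd_sqrt :: "complex^'n^'n \<Rightarrow> complex^'n^'n" where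
  "psd_sqrt A = (THE B. psd_mat B \<and> B ** B = A)"

definition trace_norm :: "complex^'n^'n \<Rightarrow> real" where
  "trace_norm A = Re (trace (psd_sqrt (adj_mat A ** A)))"

definition cscale_mat :: "complex \<Rightarrow> complex^'n^'n \<Rightarrow> complex^'n^'n" where
  "cscale_mat c A = (\<chi> i j. c * A$i$j)"

definition clinear_map :: "(complex^'n^'n \<Rightarrow> complex^'n^'n) \<Rightarrow> bool" where
  "clinear_map T \<longleftrightarrow> (\<forall>A B. T (A + B) = T A + T B) \<and> (\<forall>c A. T (cscale_mat c A) = cscale_mat c (T A))"

text \<open>A block operator on H \<otimes> C^k, given by its blocks A i j (i, j < k), is positive
  semidefinite iff its quadratic form is real and nonnegative on all vectors
  (v_0, ..., v_{k-1}) in H^k.\<close>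
definition psd_block :: "nat \<Rightarrow> (nat \<Rightarrow> nat \<Rightarrow> complex^'n^'n) \<Rightarrow> bool" where
  "psd_block k A \<longleftrightarrow> (\<forall>v :: nat \<Rightarrow> complex^'n.
     Im (\<Sum>i<k. \<Sum>j<k. cinner_vec (v i) (A i j *v v j)) = 0 \<and>
     0 \<le> Re (\<Sum>i<k. \<Sum>j<k. cinner_vec (v i) (A i j *v v j)))"

text \<open>complete positivity: T \<otimes> id_k is positive for every k\<close>
definition completely_positive :: "(complex^'n^'n \<Rightarrow> complex^'n^'n) \<Rightarrow> bool" where
  "completely_positive T \<longleftrightarrow> (\<forall>k A. psd_block k A \<longrightarrow> psd_block k (\<lambda>i j. T (A i j)))"

definition channel :: "(complex^'n^'n \<Rightarrow> complex^'n^'n) \<Rightarrow> bool" where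
  "channel T \<longleftrightarrow> clinear_map T \<and> completely_positive T \<and> (\<forall>A. trace (T A) = trace A)"

definition superop_norm :: "(complex^'n^'n \<Rightarrow> complex^'n^'n) \<Rightarrow> real" where
  "superop_norm X = Sup {trace_norm (X \<rho>) | \<rho>. trace_norm \<rho> \<le> 1}"

definition ket_bra :: "complex^'n \<Rightarrow> complex^'n^'n" where
  "ket_bra \<psi> = (\<chi> i j. \<psi>$i * cnj (\<psi>$j))"

end

theory Submission
  imports Defs
begin

abbreviation ci :: "complex^'n \<Rightarrow> complex^'n \<Rightarrow> complex" where "ci \<equiv> cinner_vec"

lemma ci_add_left: "ci (x + y) z = ci x z + ci y z"
  by (simp add: cinner_vec_def sum.distrib algebra_simps)
lemma ci_add_right: "ci x (y + z) = ci x y + ci x z"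
  by (simp add: cinner_vec_def sum.distrib algebra_simps)
lemma ci_diff_left: "ci (x - y) z = ci x z - ci y z"
  by (simp add: cinner_vec_def sum_subtractf algebra_simps)
lemma ci_diff_right: "ci x (y - z) = ci x y - ci x z"
  by (simp add: cinner_vec_def sum_subtractf algebra_simps)
lemma ci_scale_left: "ci (c *s x) z = cnj c * ci x z"
  by (simp add: cinner_vec_def sum_distrib_left algebra_simps)
lemma ci_scale_right: "ci x (c *s z) = c * ci x z"
  by (simp add: cinner_vec_def sum_distrib_left algebra_simps)
lemma scaleR_vec_s: "r *\<^sub>R (x::complex^'n) = (of_real r :: complex) *s x"
  by (simp add: vec_eq_iff complex_eq_iff)
lemma ci_scaleR_left: "ci (r *\<^sub>R x) z = of_real r * ci x z"
  by (simp add: scaleR_vec_s ci_scale_left)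
lemma ci_scaleR_right: "ci x (r *\<^sub>R z) = of_real r * ci x z"
  by (simp add: scaleR_vec_s ci_scale_right)
lemma ci_zero_left[simp]: "ci 0 z = 0"
  by (simp add: cinner_vec_def)
lemma ci_zero_right[simp]: "ci z 0 = 0"
  by (simp add: cinner_vec_def)
lemma ci_sum_left: "ci (\<Sum>j\<in>J. f j) z = (\<Sum>j\<in>J. ci (f j) z)"
  by (induct J rule: infinite_finite_induct) (auto simp: ci_add_left)
lemma ci_sum_right: "ci z (\<Sum>j\<in>J. f j) = (\<Sum>j\<in>J. ci z (f j))"
  by (induct J rule: infinite_finite_induct) (auto simp: ci_add_right)
lemma ci_cnj: "ci x y = cnj (ci y x)"
  by (simp add: cinner_vec_def mult.commute)
lemma ci_self: "ci x x = of_real (norm x ^ 2)"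
proof -
  have "ci x x = (\<Sum>i\<in>UNIV. of_real (norm (x$i) ^ 2))"
    unfolding cinner_vec_def by (intro sum.cong refl) (metis complex_norm_square mult.commute of_real_power)
  also have "\<dots> = of_real (\<Sum>i\<in>UNIV. norm (x$i) ^ 2)"
    by (simp only: of_real_sum)
  also have "(\<Sum>i\<in>UNIV. norm (x$i) ^ 2) = norm x ^ 2"
    by (simp add: norm_vec_def L2_set_def sum_nonneg)
  finally show ?thesis .
qed
lemma ci_self_Re: "Re (ci x x) = norm x ^ 2"
  by (simp add: ci_self)
lemma inner_ci: "inner u v = Re (ci u v)"
  by (simp add: inner_vec_def cinner_vec_def inner_complex_def Re_sum)
lemma inner_ci_Im: "inner (\<i> *s u) v = Im (ci u v)"
  by (simp add: inner_vec_def cinner_vec_def inner_complex_def Im_sum)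

lemma mv_add: "A *v (x + y) = A *v x + A *v (y::complex^'n)"
  by (simp add: matrix_vector_right_distrib)
lemma mv_diff: "A *v (x - y) = A *v x - A *v (y::complex^'n)"
  by (simp add: vec_eq_iff matrix_vector_mult_def sum_subtractf algebra_simps)
lemma mv_scale: "A *v (c *s x) = c *s (A *v (x::complex^'n))"
  by (simp add: vec_eq_iff matrix_vector_mult_def sum_distrib_left algebra_simps)
lemma mv_scaleR: "A *v (c *\<^sub>R x) = c *\<^sub>R (A *v (x::complex^'n))"
  by (simp add: scaleR_vec_s mv_scale)
lemma mv_sum: "A *v (\<Sum>j\<in>J. f j) = (\<Sum>j\<in>J. A *v (f j::complex^'n))"
  by (induct J rule: infinite_finite_induct) (auto simp: mv_add)
lemma mv_zero[simp]: "A *v (0::complex^'n) = 0"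
  by (simp add: vec_eq_iff matrix_vector_mult_def)
lemma adj_ci: "ci u (adj_mat A *v w) = ci (A *v u) w"
proof -
  have "ci u (adj_mat A *v w) = (\<Sum>a\<in>UNIV. \<Sum>b\<in>UNIV. cnj (u$a) * cnj (A$b$a) * w$b)"
    by (simp add: cinner_vec_def adj_mat_def matrix_vector_mult_def sum_distrib_left mult.assoc)
  also have "\<dots> = (\<Sum>b\<in>UNIV. \<Sum>a\<in>UNIV. cnj (u$a) * cnj (A$b$a) * w$b)"
    by (rule sum.swap)
  also have "\<dots> = ci (A *v u) w"
    by (simp add: cinner_vec_def matrix_vector_mult_def sum_distrib_right sum_distrib_left mult_ac)
  finally show ?thesis .
qed

definition outer :: "complex^'n \<Rightarrow> complex^'n \<Rightarrow> complex^'n^'n" where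
  "outer u v = (\<chi> a b. u$a * cnj (v$b))"
lemma outer_mv: "outer u v *v x = ci v x *s u"
  by (simp add: outer_def vec_eq_iff matrix_vector_mult_def cinner_vec_def sum_distrib_left algebra_simps)
lemma ket_bra_outer: "ket_bra x = outer x x"
  by (simp add: ket_bra_def outer_def)
lemma trace_outer: "trace (outer u v) = ci v u"
  by (simp add: trace_def outer_def cinner_vec_def mult.commute)

lemma cmsq: "z * cnj z = (of_real (cmod z))^2"
  using complex_norm_square[of z] by simp
lemma cmsq': "cnj z * z = (of_real (cmod z))^2"
  using complex_norm_square[of z] by (simp add: mult.commute)
lemma trace_zero[simp]: "trace (0::complex^'n^'n) = 0"
  by (simp add: trace_def)

lemma psd_herm:
  assumes "psd_mat A"
  shows "ci x (A *v y) = ci (A *v x) y"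
proof -
  define s where "s u v = ci u (A *v v)" for u v
  have q: "Im (s u u) = 0" for u using assms unfolding psd_mat_def s_def by auto
  have e1: "s (x+y) (x+y) = s x x + s x y + s y x + s y y"
    by (simp add: s_def mv_add ci_add_left ci_add_right)
  have e2: "s (x + \<i> *s y) (x + \<i> *s y) = s x x + \<i> * s x y - \<i> * s y x + s y y"
    by (simp add: s_def mv_add mv_scale ci_add_left ci_add_right ci_scale_left ci_scale_right algebra_simps)
  have a: "Im (s x y) + Im (s y x) = 0" using q[of "x+y"] q[of x] q[of y] e1 by simp
  have b: "Re (s x y) - Re (s y x) = 0" using q[of "x + \<i> *s y"] q[of x] q[of y] e2 by simp
  have "s x y = cnj (s y x)" using a b by (simp add: complex_eq_iff)
  then show ?thesis by (simp add: s_def ci_cnj[of "A *v x" y])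
qed

lemma psd_Re: "psd_mat A \<Longrightarrow> 0 \<le> Re (ci x (A *v x))"
  and psd_Im: "psd_mat A \<Longrightarrow> Im (ci x (A *v x)) = 0"
  by (auto simp: psd_mat_def)

lemma psd_adj_mult: "psd_mat (adj_mat X ** X)"
proof -
  have "ci v ((adj_mat X ** X) *v v) = of_real (norm (X *v v)^2)" for v
    by (simp only: matrix_vector_mul_assoc[symmetric] adj_ci ci_self)
  then show ?thesis unfolding psd_mat_def by simp
qed

lemma psd_ket_bra: "psd_mat (ket_bra p)"
proof -
  have "ci v (ket_bra p *v v) = of_real ((cmod (ci p v))^2)" for v
    by (simp add: ket_bra_outer outer_mv ci_scale_right ci_cnj[of v p] cmsq)
  then show ?thesis unfolding psd_mat_def by simp
qed

lemma cp_pos: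
  assumes "completely_positive T" "psd_mat A"
  shows "psd_mat (T A)"
proof -
  have s1: "\<And>f::nat\<Rightarrow>complex. (\<Sum>i<1. f i) = f 0" by simp
  have "psd_block 1 (\<lambda>i j. A)" using assms(2) unfolding psd_block_def psd_mat_def s1 by simp
  then have h: "psd_block 1 (\<lambda>i j. T A)" using assms(1) unfolding completely_positive_def by blast
  show ?thesis unfolding psd_mat_def
  proof
    fix v
    show "Im (ci v (T A *v v)) = 0 \<and> 0 \<le> Re (ci v (T A *v v))"
      using h[unfolded psd_block_def, rule_format, of "\<lambda>_. v"] unfolding s1 by simp
  qed
qed

definition onb :: "(nat \<Rightarrow> complex^'n) \<Rightarrow> bool" where
  "onb e \<longleftrightarrow> (\<forall>i<CARD('n). \<forall>j<CARD('n). ci (e i) (e j) = (if i = j then 1 else 0)) \<and>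
     (\<forall>x. x = (\<Sum>j<CARD('n). ci (e j) x *s e j))"

lemma onb_orth: "onb e \<Longrightarrow> i < CARD('n) \<Longrightarrow> j < CARD('n) \<Longrightarrow> ci (e i) (e j :: complex^'n) = (if i = j then 1 else 0)"
  unfolding onb_def by (drule conjunct1) simp
lemma onb_exp: "onb e \<Longrightarrow> (x::complex^'n) = (\<Sum>j<CARD('n). ci (e j) x *s e j)"
  unfolding onb_def by (drule conjunct2, erule allE, assumption)

lemma onb_parseval:
  assumes "onb e"
  shows "ci x (y::complex^'n) = (\<Sum>j<CARD('n). cnj (ci (e j) x) * ci (e j) y)"
proof -
  have "ci x y = ci (\<Sum>j<CARD('n). ci (e j) x *s e j) y" by (rule arg_cong[OF onb_exp[OF assms, of x]])
  also have "\<dots> = (\<Sum>j<CARD('n). cnj (ci (e j) x) * ci (e j) y)"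
    by (simp add: ci_sum_left ci_scale_left)
  finally show ?thesis .
qed

lemma onb_norm:
  assumes "onb e"
  shows "norm (x::complex^'n) ^ 2 = (\<Sum>j<CARD('n). cmod (ci (e j) x) ^ 2)"
proof -
  have "of_real (norm x ^ 2) = (\<Sum>j<CARD('n). cnj (ci (e j) x) * ci (e j) x)"
    using onb_parseval[OF assms, of x x] by (simp add: ci_self)
  also have "\<dots> = of_real (\<Sum>j<CARD('n). cmod (ci (e j) x) ^ 2)"
    by (simp add: cmsq')
  finally show ?thesis by (simp only: of_real_eq_iff)
qed

lemma sum_mat_mv: "(\<Sum>j\<in>J. M j) *v (x::complex^'n) = (\<Sum>j\<in>J. M j *v x)"
  by (induct J rule: infinite_finite_induct) (auto simp: matrix_vector_mult_add_rdistrib)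

lemma onb_matrix:
  assumes "onb e"
  shows "(M::complex^'n^'n) = (\<Sum>j<CARD('n). outer (M *v e j) (e j))"
proof -
  show ?thesis
  proof (subst matrix_eq, intro allI)
    fix x
    have "M *v x = M *v (\<Sum>j<CARD('n). ci (e j) x *s e j)" by (rule arg_cong[OF onb_exp[OF assms, of x]])
    also have "\<dots> = (\<Sum>j<CARD('n). outer (M *v e j) (e j)) *v x"
      by (simp add: mv_sum mv_scale sum_mat_mv outer_mv)
    finally show "M *v x = (\<Sum>j<CARD('n). outer (M *v e j) (e j)) *v x" .
  qed
qed

lemma trace_sum: "trace (\<Sum>j\<in>J. M j) = (\<Sum>j\<in>J. trace (M j :: complex^'n^'n))"
  by (induct J rule: infinite_finite_induct) (auto simp: trace_add)

lemma onb_trace: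
  assumes "onb e"
  shows "trace (M::complex^'n^'n) = (\<Sum>j<CARD('n). ci (e j) (M *v e j))"
  by (subst onb_matrix[OF assms, of M]) (simp add: trace_sum trace_outer)

lemma ii_scale_inj: "\<i> *s a = \<i> *s b \<Longrightarrow> a = (b::complex^'n)"
  by (simp add: vec_eq_iff)

lemma orth_family_set:
  fixes e :: "nat \<Rightarrow> complex^'n" and k :: nat
  defines "S \<equiv> e ` {..<k} \<union> (\<lambda>j. \<i> *s e j) ` {..<k}"
  shows "finite S" "card S \<le> 2 * k"
    "\<And>x. (\<forall>y\<in>S. inner x y = 0) \<Longrightarrow> (\<forall>j<k. ci (e j) x = 0)"
proof -
  show "finite S" unfolding S_def by simp
  show "card S \<le> 2 * k" unfolding S_def
    by (rule order.trans[OF card_Un_le])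
       (use card_image_le[of "{..<k}" e] card_image_le[of "{..<k}" "\<lambda>j. \<i> *s e j"] in simp)
  fix x assume h: "\<forall>y\<in>S. inner x y = 0"
  show "\<forall>j<k. ci (e j) x = 0"
  proof (intro allI impI)
    fix j assume j: "j < k"
    have "inner x (e j) = 0" using h j unfolding S_def by auto
    then have "inner (e j) x = 0" by (simp add: inner_commute)
    then have 1: "Re (ci (e j) x) = 0" by (simp add: inner_ci)
    have "inner x (\<i> *s e j) = 0" using h j unfolding S_def by auto
    then have "inner (\<i> *s e j) x = 0" by (simp add: inner_commute)
    then have 2: "Im (ci (e j) x) = 0" by (simp add: inner_ci_Im)
    show "ci (e j) x = 0" using 1 2 by (simp add: complex_eq_iff)
  qed
qed

lemma exists_orth:
  fixes e :: "nat \<Rightarrow> complex^'n"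
  assumes "k < CARD('n)"
  shows "\<exists>x. x \<noteq> 0 \<and> (\<forall>j<k. ci (e j) x = 0)"
proof -
  define S where "S = e ` {..<k} \<union> (\<lambda>j. \<i> *s e j) ` {..<k}"
  note fs = orth_family_set[of e k, folded S_def]
  have "dim S \<le> card S" using fs(1) by (rule dim_le_card')
  also have "\<dots> < DIM(complex^'n)" using fs(2) assms by simp
  finally obtain x where x: "x \<noteq> 0" "\<And>y. y \<in> span S \<Longrightarrow> orthogonal x y"
    using orthogonal_to_subspace_exists by blast
  have "\<forall>y\<in>S. inner x y = 0" using x(2) span_base unfolding orthogonal_def by blast
  then show ?thesis using fs(3) x(1) by blast
qed

lemma orth_bound:
  fixes e :: "nat \<Rightarrow> complex^'n"
  assumes orth: "\<forall>i<k. \<forall>j<k. ci (e i) (e j) = (if i = j then 1 else 0)"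
  shows "k \<le> CARD('n)"
proof -
  define S1 where "S1 = e ` {..<k}"
  define S2 where "S2 = (\<lambda>j. \<i> *s e j) ` {..<k}"
  have inj1: "inj_on e {..<k}"
  proof (rule inj_onI)
    fix i j assume "i \<in> {..<k}" "j \<in> {..<k}" "e i = e j"
    then show "i = j" using orth by (metis lessThan_iff one_neq_zero)
  qed
  have inj2: "inj_on (\<lambda>j. \<i> *s e j) {..<k}"
    using inj1 ii_scale_inj unfolding inj_on_def by blast
  have disj: "S1 \<inter> S2 = {}"
  proof (rule ccontr)
    assume "S1 \<inter> S2 \<noteq> {}"
    then obtain i j where ij: "i < k" "j < k" "e i = \<i> *s e j" unfolding S1_def S2_def by auto
    have c: "ci (e i) (e j) = 0 \<or> ci (e i) (e j) = 1" using orth ij(1,2) by auto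
    have "1 = ci (e i) (e i)" using orth ij(1) by simp
    also have "\<dots> = ci (e i) (\<i> *s e j)" using ij(3) by (rule arg_cong)
    also have "\<dots> = \<i> * ci (e i) (e j)" by (rule ci_scale_right)
    finally show False using c by auto
  qed
  have c: "card (S1 \<union> S2) = 2 * k"
    using card_Un_disjoint[of S1 S2] disj card_image[OF inj1] card_image[OF inj2]
    unfolding S1_def S2_def by simp
  have ij_im: "Im (ci (e i) (e j)) = 0" if "i < k" "j < k" for i j
    using orth that by simp
  have ij_ne: "ci (e i) (e j) = 0" if "i < k" "j < k" "i \<noteq> j" for i j
    using orth that by simp
  have po: "pairwise orthogonal (S1 \<union> S2)"
  proof (unfold pairwise_def, intro ballI impI)
    fix u v assume uv: "u \<in> S1 \<union> S2" "v \<in> S1 \<union> S2" "u \<noteq> v"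
    obtain i where i: "i < k" "u = e i \<or> u = \<i> *s e i" using uv(1) unfolding S1_def S2_def by auto
    obtain j where j: "j < k" "v = e j \<or> v = \<i> *s e j" using uv(2) unfolding S1_def S2_def by auto
    have ne: "u = e i \<and> v = e j \<or> u = \<i> *s e i \<and> v = \<i> *s e j \<Longrightarrow> i \<noteq> j"
      using uv(3) by auto
    show "orthogonal u v" unfolding orthogonal_def inner_ci
      using i(2) j(2) ne ij_im[OF i(1) j(1)] ij_ne[OF i(1) j(1)]
      by (auto simp: ci_scale_left ci_scale_right)
  qed
  have nz: "0 \<notin> S1 \<union> S2"
  proof
    assume "0 \<in> S1 \<union> S2"
    then obtain i where "i < k" "e i = 0 \<or> \<i> *s e i = 0" unfolding S1_def S2_def by auto
    then have "e i = 0" by (auto simp: vec_eq_iff)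
    then show False using orth \<open>i < k\<close> by (metis ci_zero_left zero_neq_one)
  qed
  have "card (S1 \<union> S2) \<le> DIM(complex^'n)"
    using independent_bound[OF pairwise_orthogonal_independent[OF po nz]] by simp
  then show ?thesis using c by simp
qed

lemma orth_complete:
  fixes e :: "nat \<Rightarrow> complex^'n"
  assumes orth: "\<forall>i<CARD('n). \<forall>j<CARD('n). ci (e i) (e j) = (if i = j then 1 else 0)"
  shows "onb e"
proof -
  let ?N = "CARD('n)"
  have exp: "x = (\<Sum>j<?N. ci (e j) x *s e j)" for x
  proof (rule ccontr)
    define y where "y = x - (\<Sum>j<?N. ci (e j) x *s e j)"
    assume "x \<noteq> (\<Sum>j<?N. ci (e j) x *s e j)"
    then have yn: "y \<noteq> 0" unfolding y_def by simp
    have yo: "ci (e i) y = 0" if "i < ?N" for i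
    proof -
      have "ci (e i) y = ci (e i) x - (\<Sum>j<?N. ci (e j) x * ci (e i) (e j))"
        unfolding y_def by (simp add: ci_diff_right ci_sum_right ci_scale_right)
      also have "(\<Sum>j<?N. ci (e j) x * ci (e i) (e j)) = (\<Sum>j<?N. if j = i then ci (e j) x else 0)"
        using orth that by (intro sum.cong) auto
      also have "\<dots> = ci (e i) x" using that by simp
      finally show ?thesis by simp
    qed
    define z where "z = (1 / norm y) *\<^sub>R y"
    have zz: "ci z z = 1" using yn unfolding z_def
      by (simp add: ci_scaleR_left ci_scaleR_right ci_self power2_eq_square)
    have zo: "ci (e i) z = 0" if "i < ?N" for i
      using yo[OF that] unfolding z_def by (simp add: ci_scaleR_right)
    define e' where "e' = e(?N := z)"
    have "\<forall>i<Suc ?N. \<forall>j<Suc ?N. ci (e' i) (e' j) = (if i = j then 1 else 0)"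
    proof (intro allI impI)
      fix i j assume "i < Suc ?N" "j < Suc ?N"
      then consider "i < ?N" "j < ?N" | "i = ?N" "j < ?N" | "i < ?N" "j = ?N" | "i = ?N" "j = ?N"
        by linarith
      then show "ci (e' i) (e' j) = (if i = j then 1 else 0)"
      proof cases
        case 1 then show ?thesis using orth by (simp add: e'_def)
      next
        case 2 then show ?thesis using zo[of j] by (simp add: e'_def ci_cnj[of z])
      next
        case 3 then show ?thesis using zo[of i] by (simp add: e'_def)
      next
        case 4 then show ?thesis using zz by (simp add: e'_def)
      qed
    qed
    from orth_bound[OF this] show False by simp
  qed
  show ?thesis unfolding onb_def
  proof (intro conjI)
    show "\<forall>x. x = (\<Sum>j<?N. ci (e j) x *s e j)" by (intro allI) (rule exp)
  qed (rule orth)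
qed

lemma cont_nth[continuous_intros]: "continuous_on S (\<lambda>v::complex^'n. v $ a)"
  by (rule linear_continuous_on[OF bounded_linear_vec_nth])

lemma cont_ci: "continuous_on S (\<lambda>v::complex^'n. ci u v)"
  unfolding cinner_vec_def by (intro continuous_intros)

lemma cont_q: "continuous_on S (\<lambda>v::complex^'n. Re (ci v (A *v v)))"
proof -
  have "(\<lambda>v::complex^'n. Re (ci v (A *v v))) = (\<lambda>v. Re (\<Sum>a\<in>UNIV. cnj (v$a) * (\<Sum>b\<in>UNIV. A$a$b * v$b)))"
    by (simp add: cinner_vec_def matrix_vector_mult_def)
  then show ?thesis by (simp only:) (intro continuous_intros)
qed

lemma quad_zero:
  fixes a b :: real
  assumes "\<forall>t. a * t + b * t^2 \<le> 0"
  shows "a = 0"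
proof (rule ccontr)
  assume a: "a \<noteq> 0"
  define s where "s = 1 / (\<bar>b\<bar> + 1)"
  have s: "s > 0" unfolding s_def by simp
  have bs: "\<bar>b * s\<bar> < 1" unfolding s_def by (simp add: abs_mult field_simps)
  have "a * (a * s) + b * (a * s)^2 = a^2 * s * (1 + b * s)"
    by (simp add: power2_eq_square algebra_simps)
  also have "\<dots> > 0" using a s bs by (intro mult_pos_pos) (auto simp: abs_less_iff)
  finally show False using assms by (metis not_le)
qed

lemma max_eigen:
  fixes A :: "complex^'n^'n"
  assumes psd: "psd_mat A"
    and V: "V = {v. \<forall>j<k. ci (e j) v = 0}"
    and inv: "\<forall>v\<in>V. A *v v \<in> V"
    and u: "u \<in> V" "norm u = 1"
    and mx: "\<forall>y\<in>V. norm y = 1 \<longrightarrow> Re (ci y (A *v y)) \<le> Re (ci u (A *v u))"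
  shows "A *v u = Re (ci u (A *v u)) *\<^sub>R u"
proof -
  define q where "q v = Re (ci v (A *v v))" for v
  define M where "M = q u"
  have Vadd: "x + y \<in> V" if "x \<in> V" "y \<in> V" for x y
    using that unfolding V by (simp add: ci_add_right)
  have Vdiff: "x - y \<in> V" if "x \<in> V" "y \<in> V" for x y
    using that unfolding V by (simp add: ci_diff_right)
  have VscR: "c *\<^sub>R x \<in> V" if "x \<in> V" for x c
    using that unfolding V by (simp add: ci_scaleR_right)
  have Vsc: "c *s x \<in> V" if "x \<in> V" for x c
    using that unfolding V by (simp add: ci_scale_right)
  have qscale: "q (c *\<^sub>R v) = c^2 * q v" for c v
    unfolding q_def by (simp add: mv_scaleR ci_scaleR_left ci_scaleR_right power2_eq_square)
  have bound: "q w \<le> M * norm w ^ 2" if "w \<in> V" for w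
  proof (cases "w = 0")
    case True then show ?thesis by (simp add: q_def)
  next
    case False
    define w' where "w' = (1 / norm w) *\<^sub>R w"
    have "w' \<in> V" using VscR[OF that] unfolding w'_def .
    moreover have "norm w' = 1" using False unfolding w'_def by simp
    ultimately have "q w' \<le> M" using mx unfolding q_def M_def by blast
    moreover have "q w' = q w / norm w ^ 2" unfolding w'_def qscale by (simp add: power_divide)
    ultimately show ?thesis using False by (simp add: field_simps)
  qed
  have key: "Re (ci y (A *v u - M *\<^sub>R u)) = 0" if y: "y \<in> V" for y
  proof -
    define a where "a = 2 * (Re (ci y (A *v u)) - M * Re (ci y u))"
    define b where "b = q y - M * norm y ^ 2"
    have h1: "Re (ci u (A *v y)) = Re (ci y (A *v u))"
      using psd_herm[OF psd, of u y] ci_cnj[of "A *v u" y] by simp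
    have h2: "Re (ci u y) = Re (ci y u)" using ci_cnj[of u y] by simp
    have "a * t + b * t^2 \<le> 0" for t
    proof -
      have e1: "q (u + t *\<^sub>R y) = q u + t * (Re (ci u (A *v y)) + Re (ci y (A *v u))) + t^2 * q y"
        unfolding q_def
        by (simp add: mv_add mv_scaleR ci_add_left ci_add_right ci_scaleR_left ci_scaleR_right
            power2_eq_square algebra_simps)
      have e2: "norm (u + t *\<^sub>R y) ^ 2 = 1 + t * (Re (ci u y) + Re (ci y u)) + t^2 * norm y ^ 2"
      proof -
        have "norm (u + t *\<^sub>R y) ^ 2 = Re (ci (u + t *\<^sub>R y) (u + t *\<^sub>R y))" by (simp add: ci_self)
        also have "\<dots> = Re (ci u u) + t * (Re (ci u y) + Re (ci y u)) + t^2 * Re (ci y y)"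
          by (simp add: ci_add_left ci_add_right ci_scaleR_left ci_scaleR_right
            power2_eq_square algebra_simps)
        finally show ?thesis using u(2) by (simp add: ci_self)
      qed
      have "q (u + t *\<^sub>R y) \<le> M * norm (u + t *\<^sub>R y) ^ 2"
        using bound[OF Vadd[OF u(1) VscR[OF y]]] .
      then show ?thesis unfolding a_def b_def e1 e2 h1 h2 M_def
        by (simp add: algebra_simps)
    qed
    then have "a = 0" using quad_zero by blast
    then show ?thesis unfolding a_def
      by (simp add: ci_diff_right ci_scaleR_right)
  qed
  define w where "w = A *v u - M *\<^sub>R u"
  have wV: "w \<in> V" unfolding w_def using inv u(1) by (intro Vdiff VscR) auto
  have "ci y w = 0" if "y \<in> V" for y
  proof -
    have "Re (ci y w) = 0" using key[OF that] unfolding w_def .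
    moreover have "Re (ci (\<i> *s y) w) = 0" using key[OF Vsc[OF that]] unfolding w_def .
    then have "Im (ci y w) = 0" by (simp add: ci_scale_left)
    ultimately show ?thesis by (simp add: complex_eq_iff)
  qed
  then have "ci w w = 0" using wV by blast
  then have "w = 0" by (simp add: ci_self)
  then show ?thesis unfolding w_def M_def q_def by simp
qed

lemma spectral_partial:
  fixes A :: "complex^'n^'n"
  assumes psd: "psd_mat A"
  shows "k \<le> CARD('n) \<Longrightarrow> \<exists>e. (\<forall>i<k. \<forall>j<k. ci (e i) (e j) = (if i = j then 1 else 0)) \<and>
      (\<forall>j<k. A *v e j = Re (ci (e j) (A *v e j)) *\<^sub>R e j)"
proof (induction k)
  case 0 then show ?case by simp
next
  case (Suc k)
  then obtain e where orth: "\<forall>i<k. \<forall>j<k. ci (e i) (e j) = (if i = j then 1 else 0)"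
    and eig: "\<forall>j<k. A *v e j = Re (ci (e j) (A *v e j)) *\<^sub>R e j" by auto
  define V where "V = {v. \<forall>j<k. ci (e j) v = 0}"
  obtain x where x: "x \<noteq> 0" "\<forall>j<k. ci (e j) x = 0" using exists_orth[of k e] Suc.prems by auto
  define K where "K = {v\<in>V. norm v = 1}"
  have "V = (\<Inter>j\<in>{..<k}. {v. ci (e j) v = 0})" unfolding V_def by auto
  then have clV: "closed V"
    by (simp only:) (intro closed_INT ballI closed_Collect_eq cont_ci continuous_on_const)
  have K_eq: "K = sphere 0 1 \<inter> V" unfolding K_def by auto
  have cK: "compact K" unfolding K_eq by (rule compact_Int_closed[OF compact_sphere clV])
  have x1: "(1 / norm x) *\<^sub>R x \<in> K" using x unfolding K_def V_def by (simp add: ci_scaleR_right)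
  then have neK: "K \<noteq> {}" by auto
  obtain u where uK: "u \<in> K" and umax: "\<forall>y\<in>K. Re (ci y (A *v y)) \<le> Re (ci u (A *v u))"
    using continuous_attains_sup[OF cK neK cont_q[of K A]] by blast
  have inv: "\<forall>v\<in>V. A *v v \<in> V"
  proof (intro ballI)
    fix v assume v: "v \<in> V"
    have "ci (e j) (A *v v) = 0" if j: "j < k" for j
    proof -
      have "ci (e j) (A *v v) = ci (A *v e j) v" by (rule psd_herm[OF psd])
      also have "\<dots> = ci (Re (ci (e j) (A *v e j)) *\<^sub>R e j) v" using eig j by simp
      also have "\<dots> = 0" using v j unfolding V_def by (simp add: ci_scaleR_left)
      finally show ?thesis .
    qed
    then show "A *v v \<in> V" unfolding V_def by simp
  qed
  have uV: "u \<in> V" and un: "norm u = 1" using uK unfolding K_def by auto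
  have ueig: "A *v u = Re (ci u (A *v u)) *\<^sub>R u"
    by (rule max_eigen[OF psd V_def inv uV un]) (use umax in \<open>auto simp: K_def\<close>)
  define e' where "e' = e(k := u)"
  have uu: "ci u u = 1" using un by (simp add: ci_self)
  have ue: "ci (e i) u = 0" if "i < k" for i using uV that unfolding V_def by simp
  have eu: "ci u (e i) = 0" if "i < k" for i using ue[OF that] ci_cnj[of u "e i"] by simp
  show ?case
  proof (intro exI[of _ e'] conjI allI impI)
    fix i j assume "i < Suc k" "j < Suc k"
    then show "ci (e' i) (e' j) = (if i = j then 1 else 0)"
      using orth uu ue eu unfolding e'_def by (auto simp: less_Suc_eq)
  next
    fix j assume "j < Suc k"
    then show "A *v e' j = Re (ci (e' j) (A *v e' j)) *\<^sub>R e' j"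
      using eig ueig unfolding e'_def by (auto simp: less_Suc_eq)
  qed
qed

lemma spectral:
  fixes A :: "complex^'n^'n"
  assumes psd: "psd_mat A"
  obtains e where "onb e" "\<And>j. j < CARD('n) \<Longrightarrow> A *v e j = Re (ci (e j) (A *v e j)) *\<^sub>R e j"
  using spectral_partial[OF psd, of "CARD('n)"] orth_complete by blast

lemma ci_neg_right: "ci x (- y) = - ci x y"
  by (simp add: cinner_vec_def sum_negf)

lemma onb_orth_sum:
  assumes "onb e" "i < CARD('n)"
  shows "(\<Sum>j<CARD('n). ci (e j) (e i :: complex^'n) *s v j) = v i"
proof -
  have "(\<Sum>j<CARD('n). ci (e j) (e i) *s v j) = (\<Sum>j<CARD('n). if j = i then v j else 0)"
    using onb_orth[OF assms(1)] assms(2) by (intro sum.cong) auto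
  also have "\<dots> = v i" using assms(2) by simp
  finally show ?thesis .
qed

lemma psd_sqrt_char:
  fixes A :: "complex^'n^'n"
  assumes psd: "psd_mat A" and e: "onb e"
    and eig: "\<And>j. j < CARD('n) \<Longrightarrow> A *v e j = lam j *\<^sub>R e j"
    and lam: "\<And>j. j < CARD('n) \<Longrightarrow> 0 \<le> lam j"
  shows "psd_sqrt A = (\<Sum>j<CARD('n). outer (sqrt (lam j) *\<^sub>R e j) (e j))"
proof -
  let ?N = "CARD('n)"
  define S where "S = (\<Sum>j<?N. outer (sqrt (lam j) *\<^sub>R e j) (e j))"
  have Sx: "S *v x = (\<Sum>j<?N. ci (e j) x *s (sqrt (lam j) *\<^sub>R e j))" for x
    unfolding S_def by (simp add: sum_mat_mv outer_mv)
  have Se: "S *v e i = sqrt (lam i) *\<^sub>R e i" if "i < ?N" for i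
    unfolding Sx using onb_orth_sum[OF e that] .
  have psdS: "psd_mat S"
  proof -
    have "ci x (S *v x) = of_real (\<Sum>j<?N. sqrt (lam j) * cmod (ci (e j) x) ^ 2)" for x
    proof -
      have "ci x (S *v x) = (\<Sum>j<?N. ci (e j) x * (of_real (sqrt (lam j)) * ci x (e j)))"
        unfolding Sx by (simp add: ci_sum_right ci_scale_right ci_scaleR_right)
      also have "\<dots> = (\<Sum>j<?N. of_real (sqrt (lam j) * cmod (ci (e j) x) ^ 2))"
        by (intro sum.cong refl) (simp add: ci_cnj[of x] cmsq mult.commute mult.left_commute)
      finally show ?thesis by simp
    qed
    moreover have "0 \<le> (\<Sum>j<?N. sqrt (lam j) * cmod (ci (e j) x) ^ 2)" for x
      using lam by (intro sum_nonneg) auto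
    ultimately show ?thesis unfolding psd_mat_def by simp
  qed
  have SS: "S ** S = A"
  proof (subst matrix_eq, intro allI)
    fix x
    have "(S ** S) *v x = S *v (S *v x)" by (simp add: matrix_vector_mul_assoc)
    also have "\<dots> = (\<Sum>j<?N. (ci (e j) x * of_real (sqrt (lam j))) *s (S *v e j))"
      unfolding Sx[of x] by (simp add: mv_sum mv_scale mv_scaleR scaleR_vec_s vector_smult_assoc)
    also have "\<dots> = (\<Sum>j<?N. ci (e j) x *s (A *v e j))"
    proof (intro sum.cong refl)
      fix j assume j: "j \<in> {..<?N}"
      have "of_real (sqrt (lam j)) * of_real (sqrt (lam j)) = (of_real (lam j) :: complex)"
        using lam[of j] j by (simp flip: of_real_mult)
      then show "(ci (e j) x * of_real (sqrt (lam j))) *s (S *v e j) = ci (e j) x *s (A *v e j)"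
        using j by (simp add: Se eig scaleR_vec_s vector_smult_assoc mult.assoc)
    qed
    also have "\<dots> = A *v x"
      by (subst (2) onb_exp[OF e, of x]) (simp add: mv_sum mv_scale)
    finally show "(S ** S) *v x = A *v x" .
  qed
  have uniq: "B = S" if B: "psd_mat B" "B ** B = A" for B
  proof -
    have BB: "B *v (B *v v) = A *v v" for v using B(2) by (simp add: matrix_vector_mul_assoc)
    have Be: "B *v e i = sqrt (lam i) *\<^sub>R e i" if i: "i < ?N" for i
    proof (cases "lam i = 0")
      case True
      have "ci (B *v e i) (B *v e i) = ci (e i) (B *v (B *v e i))" using psd_herm[OF B(1)] by simp
      also have "\<dots> = 0" using BB[of "e i"] eig[OF i] True by simp
      finally have "B *v e i = 0" by (simp add: ci_self)
      then show ?thesis using True by simp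
    next
      case False
      define s where "s = sqrt (lam i)"
      have s: "s > 0" using False lam[OF i] unfolding s_def by simp
      define y where "y = B *v e i - s *\<^sub>R e i"
      have "B *v y + s *\<^sub>R y = B *v (B *v e i) - (s * s) *\<^sub>R e i"
        unfolding y_def by (simp add: mv_diff mv_scaleR algebra_simps)
      also have "\<dots> = 0" using BB[of "e i"] eig[OF i] lam[OF i] unfolding s_def by simp
      finally have "B *v y = - (s *\<^sub>R y)" by (simp add: eq_neg_iff_add_eq_0)
      then have "ci y (B *v y) = - of_real s * ci y y"
        by (simp add: ci_neg_right ci_scaleR_right)
      then have "Re (ci y (B *v y)) = - s * norm y ^ 2" by (simp add: ci_self)
      moreover have "0 \<le> Re (ci y (B *v y))" using B(1) by (rule psd_Re)
      ultimately have "norm y ^ 2 \<le> 0" using s by (simp add: mult_le_0_iff)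
      then have "y = 0" by simp
      then show ?thesis unfolding y_def s_def by simp
    qed
    show "B = S"
    proof (subst matrix_eq, intro allI)
      fix x
      have "B *v x = (\<Sum>j<?N. ci (e j) x *s (B *v e j))"
        by (subst onb_exp[OF e, of x]) (simp add: mv_sum mv_scale)
      also have "\<dots> = S *v x" unfolding Sx by (intro sum.cong refl) (simp add: Be)
      finally show "B *v x = S *v x" .
    qed
  qed
  have "psd_sqrt A = S" unfolding psd_sqrt_def
  proof (rule the_equality)
    show "psd_mat S \<and> S ** S = A" using psdS SS by simp
    show "\<And>B. psd_mat B \<and> B ** B = A \<Longrightarrow> B = S" using uniq by blast
  qed
  then show ?thesis unfolding S_def .
qed

lemma svd:
  fixes X :: "complex^'n^'n"
  obtains e \<sigma> f where "onb e" "\<And>j. 0 \<le> \<sigma> j" "trace_norm X = (\<Sum>j<CARD('n). \<sigma> j)"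
    "\<And>j. j < CARD('n) \<Longrightarrow> X *v e j = \<sigma> j *\<^sub>R f j"
    "\<And>i j. i < CARD('n) \<Longrightarrow> j < CARD('n) \<Longrightarrow> i \<noteq> j \<Longrightarrow> ci (f i) (f j) = 0"
    "\<And>j. j < CARD('n) \<Longrightarrow> f j = 0 \<or> ci (f j) (f j) = 1"
    "\<And>j. j < CARD('n) \<Longrightarrow> ci (f j) (X *v e j) = of_real (\<sigma> j)"
proof -
  let ?N = "CARD('n)"
  define A where "A = adj_mat X ** X"
  have psd: "psd_mat A" unfolding A_def by (rule psd_adj_mult)
  obtain e where e: "onb e" and eig0: "\<And>j. j < ?N \<Longrightarrow> A *v e j = Re (ci (e j) (A *v e j)) *\<^sub>R e j"
    using spectral[OF psd] by blast
  define lam where "lam j = Re (ci (e j) (A *v e j))" for j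
  have lam0: "0 \<le> lam j" for j unfolding lam_def by (rule psd_Re[OF psd])
  have eig: "A *v e j = lam j *\<^sub>R e j" if "j < ?N" for j using eig0[OF that] unfolding lam_def .
  define \<sigma> where "\<sigma> j = sqrt (lam j)" for j
  have sig0: "0 \<le> \<sigma> j" for j unfolding \<sigma>_def using lam0 by simp
  have sq: "psd_sqrt A = (\<Sum>j<?N. outer (sqrt (lam j) *\<^sub>R e j) (e j))"
    by (rule psd_sqrt_char[OF psd e eig lam0])
  have tr: "trace (psd_sqrt A) = (\<Sum>j<?N. of_real (\<sigma> j))"
    unfolding sq \<sigma>_def using onb_orth[OF e]
    by (simp add: trace_sum trace_outer ci_scaleR_right)
  have tn: "trace_norm X = (\<Sum>j<?N. \<sigma> j)"
    unfolding trace_norm_def A_def[symmetric] tr by (simp add: Re_sum)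
  have XX: "ci (X *v e i) (X *v e j) = (if i = j then of_real (lam j) else 0)" if "i < ?N" "j < ?N" for i j
  proof -
    have "ci (X *v e i) (X *v e j) = ci (e i) (A *v e j)"
      unfolding A_def by (simp add: adj_ci matrix_vector_mul_assoc[symmetric])
    also have "\<dots> = (if i = j then of_real (lam j) else 0)"
      using that onb_orth[OF e that] by (simp add: eig ci_scaleR_right)
    finally show ?thesis .
  qed
  define f where "f j = (if \<sigma> j > 0 then (1 / \<sigma> j) *\<^sub>R (X *v e j) else 0)" for j
  have Xe: "X *v e j = \<sigma> j *\<^sub>R f j" if j: "j < ?N" for j
  proof (cases "\<sigma> j > 0")
    case True then show ?thesis unfolding f_def by simp
  next
    case False
    then have "lam j = 0" using sig0[of j] lam0[of j] unfolding \<sigma>_def by simp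
    then have "ci (X *v e j) (X *v e j) = 0" using XX[OF j j] by simp
    then have "X *v e j = 0" by (simp add: ci_self)
    then show ?thesis using False unfolding f_def by simp
  qed
  have ff: "ci (f i) (f j) = 0" if "i < ?N" "j < ?N" "i \<noteq> j" for i j
    unfolding f_def using XX[OF that(1,2)] that(3) by (simp add: ci_scaleR_left ci_scaleR_right)
  have f1': "ci (f j) (f j) = 1" if j: "j < ?N" and pos: "\<sigma> j > 0" for j
  proof -
    have "ci (f j) (f j) = of_real (1 / \<sigma> j * (1 / \<sigma> j) * lam j)"
      unfolding f_def using pos XX[OF j j] by (simp add: ci_scaleR_left ci_scaleR_right)
    also have "1 / \<sigma> j * (1 / \<sigma> j) * lam j = 1"
      using pos lam0[of j] unfolding \<sigma>_def by (simp add: field_simps)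
    finally show ?thesis by simp
  qed
  have f1: "f j = 0 \<or> ci (f j) (f j) = 1" if j: "j < ?N" for j
    using f1'[OF j] unfolding f_def by auto
  have fX: "ci (f j) (X *v e j) = of_real (\<sigma> j)" if j: "j < ?N" for j
  proof -
    have "ci (f j) (X *v e j) = of_real (\<sigma> j) * ci (f j) (f j)"
      using Xe[OF j] by (simp add: ci_scaleR_right)
    then show ?thesis using f1'[OF j] sig0[of j] by (cases "\<sigma> j > 0") auto
  qed
  show ?thesis using that[OF e sig0 tn Xe ff f1 fX] .
qed

definition beta :: "(nat \<Rightarrow> complex^'n) \<Rightarrow> (nat \<Rightarrow> complex^'n) \<Rightarrow> complex^'n \<Rightarrow> complex^'n \<Rightarrow> complex" where
  "beta f e x y = (\<Sum>k<CARD('n). ci (f k) x * ci y (e k))"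

lemma beta_add_left: "beta f e (x1 + x2) y = beta f e x1 y + beta f e x2 y"
  unfolding beta_def by (simp add: ci_add_right sum.distrib algebra_simps)
lemma beta_add_right: "beta f e x (y1 + y2) = beta f e x y1 + beta f e x y2"
  unfolding beta_def by (simp add: ci_add_left sum.distrib algebra_simps)
lemma beta_diff_left: "beta f e (x1 - x2) y = beta f e x1 y - beta f e x2 y"
  unfolding beta_def by (simp add: ci_diff_right sum_subtractf algebra_simps)
lemma beta_diff_right: "beta f e x (y1 - y2) = beta f e x y1 - beta f e x y2"
  unfolding beta_def by (simp add: ci_diff_left sum_subtractf algebra_simps)
lemma beta_scale: "beta f e (c *s x) (c *s y) = (c * cnj c) * beta f e x y"
  unfolding beta_def by (simp add: ci_scale_left ci_scale_right sum_distrib_left algebra_simps)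

lemma beta_polar: "2 * (beta f e a a - beta f e b b) = beta f e (a - b) (a + b) + beta f e (a + b) (a - b)"
  by (simp add: beta_add_left beta_add_right beta_diff_left beta_diff_right algebra_simps)

lemma bessel:
  fixes f :: "nat \<Rightarrow> complex^'n"
  assumes orth: "\<And>i j. i < N \<Longrightarrow> j < N \<Longrightarrow> i \<noteq> j \<Longrightarrow> ci (f i) (f j) = 0"
    and one: "\<And>j. j < N \<Longrightarrow> f j = 0 \<or> ci (f j) (f j) = 1"
  shows "(\<Sum>k<N. cmod (ci (f k) x) ^ 2) \<le> norm x ^ 2"
proof -
  define c where "c k = ci (f k) x" for k
  define p where "p = (\<Sum>k<N. c k *s f k)"
  define s where "s = (\<Sum>k<N. cmod (c k) ^ 2)"
  have fp: "ci (f k) p = c k" if k: "k < N" for k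
  proof -
    have "ci (f k) p = (\<Sum>l<N. c l * ci (f k) (f l))"
      unfolding p_def by (simp add: ci_sum_right ci_scale_right)
    also have "\<dots> = (\<Sum>l<N. if l = k then c k * ci (f k) (f k) else 0)"
      using orth k by (intro sum.cong) auto
    also have "\<dots> = c k * ci (f k) (f k)" using k by simp
    also have "\<dots> = c k" using one[OF k] unfolding c_def by auto
    finally show ?thesis .
  qed
  have pp: "ci p p = of_real s"
  proof -
    have "ci p p = (\<Sum>k<N. cnj (c k) * ci (f k) p)"
      by (subst (1) p_def) (simp add: ci_sum_left ci_scale_left)
    also have "\<dots> = (\<Sum>k<N. of_real (cmod (c k) ^ 2))"
      by (intro sum.cong refl) (simp add: fp cmsq')
    finally show ?thesis unfolding s_def by simp
  qed
  have px: "ci p x = of_real s"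
  proof -
    have "ci p x = (\<Sum>k<N. cnj (c k) * c k)"
      unfolding p_def c_def by (simp add: ci_sum_left ci_scale_left)
    also have "\<dots> = (\<Sum>k<N. of_real (cmod (c k) ^ 2))"
      by (intro sum.cong refl) (simp add: cmsq')
    finally show ?thesis unfolding s_def by simp
  qed
  have xp: "ci x p = of_real s" using px ci_cnj[of x p] by simp
  have "0 \<le> norm (x - p) ^ 2" by simp
  also have "norm (x - p) ^ 2 = Re (ci (x - p) (x - p))" by (simp add: ci_self)
  also have "\<dots> = norm x ^ 2 - s"
    by (simp add: ci_diff_left ci_diff_right pp px xp ci_self_Re)
  finally show ?thesis unfolding s_def c_def by simp
qed

lemma beta_bound:
  fixes f e :: "nat \<Rightarrow> complex^'n"
  assumes e: "onb e"
    and orth: "\<And>i j. i < CARD('n) \<Longrightarrow> j < CARD('n) \<Longrightarrow> i \<noteq> j \<Longrightarrow> ci (f i) (f j) = 0"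
    and one: "\<And>j. j < CARD('n) \<Longrightarrow> f j = 0 \<or> ci (f j) (f j) = 1"
  shows "cmod (beta f e x y) \<le> norm x * norm y"
proof -
  let ?N = "CARD('n)"
  have "cmod (beta f e x y) \<le> (\<Sum>k<?N. cmod (ci (f k) x * ci y (e k)))"
    unfolding beta_def by (rule norm_sum)
  also have "\<dots> = (\<Sum>k<?N. \<bar>cmod (ci (f k) x)\<bar> * \<bar>cmod (ci (e k) y)\<bar>)"
    by (intro sum.cong refl) (simp add: norm_mult ci_cnj[of y])
  also have "\<dots> \<le> L2_set (\<lambda>k. cmod (ci (f k) x)) {..<?N} * L2_set (\<lambda>k. cmod (ci (e k) y)) {..<?N}"
    by (rule L2_set_mult_ineq)
  also have "L2_set (\<lambda>k. cmod (ci (f k) x)) {..<?N} \<le> norm x"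
  proof -
    have "L2_set (\<lambda>k. cmod (ci (f k) x)) {..<?N} \<le> sqrt (norm x ^ 2)"
      unfolding L2_set_def by (rule real_sqrt_le_mono[OF bessel[OF orth one, where x=x]])
    then show ?thesis by simp
  qed
  also have "L2_set (\<lambda>k. cmod (ci (e k) y)) {..<?N} = norm y"
    unfolding L2_set_def onb_norm[OF e, of y, symmetric] by simp
  finally show ?thesis by (simp add: mult_right_mono)
qed

lemma beta_diff:
  fixes f e :: "nat \<Rightarrow> complex^'n"
  assumes e: "onb e"
    and orth: "\<And>i j. i < CARD('n) \<Longrightarrow> j < CARD('n) \<Longrightarrow> i \<noteq> j \<Longrightarrow> ci (f i) (f j) = 0"
    and one: "\<And>j. j < CARD('n) \<Longrightarrow> f j = 0 \<or> ci (f j) (f j) = 1"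
    and g: "norm g = 1" and p: "norm p = 1"
  shows "cmod (beta f e g g - beta f e p p) \<le> 2 * sqrt (1 - cmod (ci g p) ^ 2)"
    "0 \<le> 1 - cmod (ci g p) ^ 2"
proof -
  define z where "z = ci g p"
  define t where "t = cmod z"
  define c where "c = (if z = 0 then 1 else z / of_real t)"
  have zz: "z * cnj z = (of_real t)^2" "cnj z * z = (of_real t)^2" by (simp_all add: t_def cmsq cmsq')
  have cc: "c * cnj c = 1"
  proof (cases "z = 0")
    case True then show ?thesis by (simp add: c_def)
  next
    case False
    then have t0: "t \<noteq> 0" by (simp add: t_def)
    have "c * cnj c = (z * cnj z) / (of_real t)^2" using False by (simp add: c_def power2_eq_square)
    then show ?thesis using t0 zz by simp
  qed
  have cz: "cnj c * z = of_real t"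
  proof (cases "z = 0")
    case True then show ?thesis by (simp add: c_def t_def)
  next
    case False
    then have t0: "t \<noteq> 0" by (simp add: t_def)
    have "cnj c * z = (cnj z * z) / of_real t" using False by (simp add: c_def)
    then show ?thesis using t0 zz by (simp add: power2_eq_square)
  qed
  define g' where "g' = c *s g"
  have g'p: "ci g' p = of_real t" using cz unfolding g'_def z_def by (simp add: ci_scale_left)
  have pg': "ci p g' = of_real t" using g'p ci_cnj[of p g'] by simp
  have "ci g' g' = (c * cnj c) * ci g g" unfolding g'_def by (simp only: ci_scale_left ci_scale_right mult_ac)
  then have g'g': "ci g' g' = 1" using g by (simp add: cc ci_self)
  have bg: "beta f e g' g' = beta f e g g" unfolding g'_def beta_scale cc by simp
  have n1: "norm (g' - p) ^ 2 = 2 - 2 * t"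
  proof -
    have "norm (g' - p) ^ 2 = Re (ci (g' - p) (g' - p))" by (simp add: ci_self)
    also have "\<dots> = 2 - 2 * t" using p by (simp add: ci_diff_left ci_diff_right g'p pg' g'g' ci_self_Re)
    finally show ?thesis .
  qed
  have n2: "norm (g' + p) ^ 2 = 2 + 2 * t"
  proof -
    have "norm (g' + p) ^ 2 = Re (ci (g' + p) (g' + p))" by (simp add: ci_self)
    also have "\<dots> = 2 + 2 * t" using p by (simp add: ci_add_left ci_add_right g'p pg' g'g' ci_self_Re)
    finally show ?thesis .
  qed
  have prod: "norm (g' - p) * norm (g' + p) = 2 * sqrt (1 - t^2)"
  proof -
    have "norm (g' - p) * norm (g' + p) = sqrt (norm (g' - p) ^ 2 * norm (g' + p) ^ 2)"
      by (simp add: real_sqrt_mult)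
    also have "norm (g' - p) ^ 2 * norm (g' + p) ^ 2 = 2^2 * (1 - t^2)"
      unfolding n1 n2 by (simp add: algebra_simps power2_eq_square)
    also have "sqrt (2^2 * (1 - t^2)) = 2 * sqrt (1 - t^2)"
      by (simp only: real_sqrt_mult real_sqrt_abs)
    finally show ?thesis .
  qed
  have "0 \<le> norm (g' - p) ^ 2 * norm (g' + p) ^ 2" by simp
  then show "0 \<le> 1 - cmod (ci g p) ^ 2"
    unfolding n1 n2 t_def z_def by (simp add: algebra_simps power2_eq_square)
  have "2 * cmod (beta f e g g - beta f e p p) = cmod (2 * (beta f e g' g' - beta f e p p))"
    by (simp only: bg norm_mult) simp
  also have "\<dots> = cmod (beta f e (g' - p) (g' + p) + beta f e (g' + p) (g' - p))"
    by (simp only: beta_polar)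
  also have "\<dots> \<le> cmod (beta f e (g' - p) (g' + p)) + cmod (beta f e (g' + p) (g' - p))"
    by (rule norm_triangle_ineq)
  also have "\<dots> \<le> norm (g' - p) * norm (g' + p) + norm (g' + p) * norm (g' - p)"
    by (intro add_mono beta_bound[OF e orth one])
  also have "\<dots> = 2 * (2 * sqrt (1 - t^2))" using prod by (simp add: mult.commute)
  finally show "cmod (beta f e g g - beta f e p p) \<le> 2 * sqrt (1 - cmod (ci g p) ^ 2)"
    unfolding t_def z_def by simp
qed

lemma concave_sqrt_sum:
  fixes mu a :: "nat \<Rightarrow> real"
  assumes "\<And>l. l \<in> I \<Longrightarrow> 0 \<le> mu l" "\<And>l. l \<in> I \<Longrightarrow> 0 \<le> a l" "(\<Sum>l\<in>I. mu l) = 1"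
  shows "(\<Sum>l\<in>I. mu l * sqrt (a l)) \<le> sqrt (\<Sum>l\<in>I. mu l * a l)"
proof -
  have "(\<Sum>l\<in>I. mu l * sqrt (a l)) = (\<Sum>l\<in>I. \<bar>sqrt (mu l)\<bar> * \<bar>sqrt (mu l * a l)\<bar>)"
    using assms(1,2) by (intro sum.cong refl) (simp add: real_sqrt_mult mult.assoc[symmetric])
  also have "\<dots> \<le> L2_set (\<lambda>l. sqrt (mu l)) I * L2_set (\<lambda>l. sqrt (mu l * a l)) I"
    by (rule L2_set_mult_ineq)
  also have "L2_set (\<lambda>l. sqrt (mu l)) I = 1"
    unfolding L2_set_def using assms by (simp)
  also have "L2_set (\<lambda>l. sqrt (mu l * a l)) I = sqrt (\<Sum>l\<in>I. mu l * a l)"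
    unfolding L2_set_def using assms(1,2) by (simp)
  finally show ?thesis by simp
qed

lemma polar: "outer b a = (\<Sum>m<4. cscale_mat (\<i>^m / 4) (ket_bra (b + \<i>^m *s a)))"
proof -
  have s4: "{..<4::nat} = {0,1,2,3}" by auto
  show ?thesis
    by (simp add: s4 vec_eq_iff outer_def ket_bra_def cscale_mat_def sum_component field_simps power3_eq_cube power2_eq_square)
qed

lemma norm_plus_scale: "norm (b + c *s a) ^ 2 = norm b ^ 2 + 2 * Re (c * ci b a) + cmod c ^ 2 * norm (a::complex^'n) ^ 2"
proof -
  have "norm (b + c *s a) ^ 2 = Re (ci (b + c *s a) (b + c *s a))" by (simp add: ci_self)
  also have "\<dots> = Re (ci b b) + Re (c * ci b a) + Re (cnj c * ci a b) + Re (cnj c * c * ci a a)"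
    by (simp add: ci_add_left ci_add_right ci_scale_left ci_scale_right algebra_simps)
  also have "Re (cnj c * ci a b) = Re (c * ci b a)" by (subst ci_cnj) (simp flip: complex_cnj_mult)
  also have "cnj c * c * ci a a = of_real (cmod c ^ 2 * norm a ^ 2)" by (simp add: ci_self cmsq')
  finally show ?thesis by (simp add: ci_self_Re)
qed

lemma norm_sum4: "(\<Sum>m<4. norm (b + \<i>^m *s a) ^ 2) = 4 * (norm a ^ 2 + norm (b::complex^'n) ^ 2)"
proof -
  have s4: "{..<4::nat} = {0,1,2,3}" by auto
  show ?thesis unfolding norm_plus_scale s4
    by (simp add: norm_power power3_eq_cube power2_eq_square algebra_simps)
qed

lemma cscale_mv: "cscale_mat c A *v x = c *s (A *v (x::complex^'n))"
  by (simp add: cscale_mat_def vec_eq_iff matrix_vector_mult_def sum_distrib_left mult.assoc)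

lemma mat_diff_mv: "(A - B) *v x = A *v x - B *v (x::complex^'n)"
  by (simp add: vec_eq_iff matrix_vector_mult_def sum_subtractf algebra_simps)

lemma additive_sum:
  fixes G :: "complex^'n^'n \<Rightarrow> complex"
  assumes add: "\<And>A B. G (A + B) = G A + G B"
  shows "G (\<Sum>j\<in>J. X j) = (\<Sum>j\<in>J. G (X j))"
proof -
  have G0: "G 0 = 0" using add[of 0 0] by simp
  show ?thesis by (induct J rule: infinite_finite_induct) (auto simp: G0 add)
qed

definition Phi :: "(nat \<Rightarrow> complex^'n) \<Rightarrow> (nat \<Rightarrow> complex^'n) \<Rightarrow> complex^'n^'n \<Rightarrow> complex" where
  "Phi f e Y = (\<Sum>k<CARD('n). ci (f k) (Y *v e k))"

lemma Phi_add: "Phi f e (A + B) = Phi f e A + Phi f e B"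
  unfolding Phi_def by (simp add: matrix_vector_mult_add_rdistrib ci_add_right sum.distrib)
lemma Phi_diff: "Phi f e (A - B) = Phi f e A - Phi f e B"
  unfolding Phi_def by (simp add: mat_diff_mv ci_diff_right sum_subtractf)
lemma Phi_scale: "Phi f e (cscale_mat c A) = c * Phi f e A"
  unfolding Phi_def by (simp add: cscale_mv ci_scale_right sum_distrib_left)
lemma Phi_outer: "Phi f e (outer x y) = beta f e x y"
  unfolding Phi_def beta_def by (simp add: outer_mv ci_scale_right mult.commute)
lemma Phi_sum: "Phi f e (\<Sum>j\<in>J. X j) = (\<Sum>j\<in>J. Phi f e (X j))"
  by (rule additive_sum) (rule Phi_add)

lemma beta_scaleR_left: "beta f e (r *\<^sub>R x) y = r * beta f e x y"
  unfolding beta_def by (simp add: ci_scaleR_right sum_distrib_left mult.assoc)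

lemma T_add: "clinear_map T \<Longrightarrow> T (A + B) = T A + T B"
  and T_scale: "clinear_map T \<Longrightarrow> T (cscale_mat c A) = cscale_mat c (T A)"
  by (auto simp: clinear_map_def)

lemma cscale_diff: "cscale_mat c (A - B) = cscale_mat c A - cscale_mat c (B::complex^'n^'n)"
  by (simp add: cscale_mat_def vec_eq_iff algebra_simps)

lemma fvdg:
  fixes T :: "complex^'n^'n \<Rightarrow> complex^'n^'n" and f e :: "nat \<Rightarrow> complex^'n"
  assumes ch: "channel T"
    and e: "onb e"
    and orth: "\<And>i j. i < CARD('n) \<Longrightarrow> j < CARD('n) \<Longrightarrow> i \<noteq> j \<Longrightarrow> ci (f i) (f j) = 0"
    and one: "\<And>j. j < CARD('n) \<Longrightarrow> f j = 0 \<or> ci (f j) (f j) = 1"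
    and p: "norm p = 1"
  shows "cmod (Phi f e (T (ket_bra p) - ket_bra p)) \<le> 2 * sqrt (1 - Re (ci p (T (ket_bra p) *v p)))"
    "0 \<le> 1 - Re (ci p (T (ket_bra p) *v p))"
proof -
  let ?N = "CARD('n)"
  define R where "R = T (ket_bra p)"
  have psd: "psd_mat R" unfolding R_def
    using cp_pos[OF _ psd_ket_bra] ch unfolding channel_def by blast
  obtain g where g: "onb g" and eig0: "\<And>j. j < ?N \<Longrightarrow> R *v g j = Re (ci (g j) (R *v g j)) *\<^sub>R g j"
    using spectral[OF psd] by blast
  define mu where "mu j = Re (ci (g j) (R *v g j))" for j
  have mu0: "0 \<le> mu j" for j unfolding mu_def by (rule psd_Re[OF psd])
  have eig: "R *v g j = mu j *\<^sub>R g j" if "j < ?N" for j using eig0[OF that] unfolding mu_def .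
  have Rexp: "R = (\<Sum>l<?N. outer (mu l *\<^sub>R g l) (g l))"
    by (subst onb_matrix[OF g, of R]) (simp add: eig)
  have gnorm: "norm (g l) = 1" if "l < ?N" for l
  proof -
    have "ci (g l) (g l) = 1" using onb_orth[OF g that that] by simp
    then have "norm (g l) ^ 2 = 1" using ci_self_Re[of "g l"] by simp
    then show ?thesis using norm_ge_zero[of "g l"] by (auto simp: power2_eq_1_iff)
  qed
  have trR: "trace R = 1"
  proof -
    have "trace R = trace (ket_bra p)" unfolding R_def using ch unfolding channel_def by blast
    also have "\<dots> = 1" using p by (simp add: ket_bra_outer trace_outer ci_self)
    finally show ?thesis .
  qed
  have summu: "(\<Sum>l<?N. mu l) = 1"
  proof -
    have "trace R = (\<Sum>l<?N. of_real (mu l))"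
      unfolding onb_trace[OF g, of R] using onb_orth[OF g]
      by (intro sum.cong refl) (simp add: eig ci_scaleR_right)
    then show ?thesis using trR by (metis of_real_eq_1_iff of_real_sum)
  qed
  define a where "a l = 1 - cmod (ci (g l) p) ^ 2" for l
  have F: "Re (ci p (R *v p)) = (\<Sum>l<?N. mu l * cmod (ci (g l) p) ^ 2)"
  proof -
    have "ci p (R *v p) = (\<Sum>l<?N. of_real (mu l) * (ci (g l) p * ci p (g l)))"
      by (subst Rexp) (simp add: sum_mat_mv outer_mv ci_sum_right ci_scale_right ci_scaleR_right mult_ac)
    also have "\<dots> = (\<Sum>l<?N. of_real (mu l * cmod (ci (g l) p) ^ 2))"
      by (intro sum.cong refl) (simp add: ci_cnj[of p] cmsq)
    finally show ?thesis by (simp only: Re_sum Re_complex_of_real)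
  qed
  have bd: "cmod (beta f e (g l) (g l) - beta f e p p) \<le> 2 * sqrt (a l)" "0 \<le> a l" if "l < ?N" for l
    unfolding a_def using beta_diff[OF e orth one gnorm[OF that] p] by auto
  have oneF: "1 - Re (ci p (R *v p)) = (\<Sum>l<?N. mu l * a l)"
    unfolding F a_def using summu by (simp add: algebra_simps sum_subtractf)
  show "0 \<le> 1 - Re (ci p (T (ket_bra p) *v p))"
    unfolding R_def[symmetric] oneF using mu0 bd(2) by (intro sum_nonneg mult_nonneg_nonneg) auto
  have "Phi f e (R - ket_bra p) = (\<Sum>l<?N. of_real (mu l) * beta f e (g l) (g l)) - beta f e p p"
    unfolding Phi_diff by (subst Rexp) (simp add: Phi_sum Phi_outer beta_scaleR_left ket_bra_outer)
  also have "\<dots> = (\<Sum>l<?N. of_real (mu l) * (beta f e (g l) (g l) - beta f e p p))"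
  proof -
    have "(\<Sum>l<?N. of_real (mu l) * beta f e p p) = beta f e p p"
      using summu by (simp flip: sum_distrib_right of_real_sum)
    then show ?thesis by (simp add: algebra_simps sum_subtractf)
  qed
  finally have "cmod (Phi f e (R - ket_bra p)) \<le> (\<Sum>l<?N. mu l * cmod (beta f e (g l) (g l) - beta f e p p))"
    using mu0 by (simp add: order.trans[OF norm_sum] norm_mult)
  also have "\<dots> \<le> (\<Sum>l<?N. mu l * (2 * sqrt (a l)))"
    using mu0 bd(1) by (intro sum_mono mult_left_mono) auto
  also have "\<dots> = 2 * (\<Sum>l<?N. mu l * sqrt (a l))" by (simp add: sum_distrib_left mult_ac)
  also have "\<dots> \<le> 2 * sqrt (\<Sum>l<?N. mu l * a l)"
    using concave_sqrt_sum[of "{..<?N}" mu a] mu0 bd(2) summu by auto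
  finally show "cmod (Phi f e (T (ket_bra p) - ket_bra p)) \<le> 2 * sqrt (1 - Re (ci p (T (ket_bra p) *v p)))"
    unfolding R_def[symmetric] oneF .
qed

lemma ket_bra_scale: "ket_bra (r *\<^sub>R w) = cscale_mat (of_real (r^2)) (ket_bra (w::complex^'n))"
  by (simp add: ket_bra_def cscale_mat_def vec_eq_iff scaleR_vec_s power2_eq_square mult_ac)

lemma outer_scaleR: "outer (r *\<^sub>R b) a = cscale_mat (of_real r) (outer b (a::complex^'n))"
  by (simp add: outer_def cscale_mat_def vec_eq_iff scaleR_vec_s mult_ac)

lemma cscale_sum: "cscale_mat c (\<Sum>j\<in>J. X j) = (\<Sum>j\<in>J. cscale_mat c (X j :: complex^'n^'n))"
  by (induct J rule: infinite_finite_induct)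
     (auto simp: cscale_mat_def vec_eq_iff sum_component algebra_simps sum_distrib_left)

theorem lemma2:
  fixes T :: "complex^'n^'n \<Rightarrow> complex^'n^'n"
  assumes "channel T"
  shows "superop_norm (\<lambda>\<rho>. T \<rho> - \<rho>)
    \<le> 4 * Sup {sqrt (1 - Re (cinner_vec \<psi> (T (ket_bra \<psi>) *v \<psi>))) | \<psi>. norm \<psi> = 1}"
proof -
  note ch = assms
  let ?N = "CARD('n)"
  define Q where "Q = {sqrt (1 - Re (cinner_vec \<psi> (T (ket_bra \<psi>) *v \<psi>))) | \<psi>. norm \<psi> = 1}"
  define R where "R = Sup Q"
  have lin: "clinear_map T" using ch unfolding channel_def by blast
  obtain e0 :: "nat \<Rightarrow> complex^'n" where e0: "onb e0" using svd[of 0] by metis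
  have Fle: "0 \<le> 1 - Re (ci p (T (ket_bra p) *v p))" if "norm p = 1" for p
    using fvdg(2)[OF ch e0, of "\<lambda>_. 0" p] that by simp
  have Fpos: "0 \<le> Re (ci p (T (ket_bra p) *v p))" for p
    using cp_pos[OF _ psd_ket_bra] ch unfolding channel_def by (blast intro: psd_Re)
  have bdd: "bdd_above Q" unfolding Q_def
  proof (rule bdd_aboveI[of _ 1], clarify)
    fix p :: "complex^'n" assume "norm p = 1"
    show "sqrt (1 - Re (ci p (T (ket_bra p) *v p))) \<le> 1" using Fpos[of p] by simp
  qed
  have Rup: "sqrt (1 - Re (ci p (T (ket_bra p) *v p))) \<le> R" if "norm p = 1" for p
    unfolding R_def by (rule cSup_upper[OF _ bdd]) (use that in \<open>auto simp: Q_def\<close>)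
  have p0: "norm (e0 0) = 1"
  proof -
    have "ci (e0 0) (e0 0) = 1" using onb_orth[OF e0, of 0 0] by simp
    then have "norm (e0 0) ^ 2 = 1" using ci_self_Re[of "e0 0"] by simp
    then show ?thesis using norm_ge_zero[of "e0 0"] by (auto simp: power2_eq_1_iff)
  qed
  have R0: "0 \<le> R" using Rup[OF p0] Fle[OF p0] by (meson order.trans real_sqrt_ge_zero)
  have main: "trace_norm (T \<rho> - \<rho>) \<le> 4 * R" if tr: "trace_norm \<rho> \<le> 1" for \<rho>
  proof -
    define Z where "Z = T \<rho> - \<rho>"
    obtain e \<sigma> f where e: "onb e" and sig0: "\<And>j. 0 \<le> \<sigma> j" and tnZ: "trace_norm Z = (\<Sum>j<?N. \<sigma> j)"
      and orth: "\<And>i j. i < ?N \<Longrightarrow> j < ?N \<Longrightarrow> i \<noteq> j \<Longrightarrow> ci (f i) (f j) = 0"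
      and one: "\<And>j. j < ?N \<Longrightarrow> f j = 0 \<or> ci (f j) (f j) = 1"
      and fZ: "\<And>j. j < ?N \<Longrightarrow> ci (f j) (Z *v e j) = of_real (\<sigma> j)"
      using svd[of Z] by metis
    define L where "L Y = Phi f e (T Y - Y)" for Y
    have Ladd: "L (A + B) = L A + L B" for A B
    proof -
      have eq: "T (A + B) - (A + B) = (T A - A) + (T B - B)" using T_add[OF lin] by simp
      show ?thesis unfolding L_def by (subst eq) (rule Phi_add)
    qed
    have Lscale: "L (cscale_mat c A) = c * L A" for c A
      unfolding L_def by (simp add: T_scale[OF lin] cscale_diff[symmetric] Phi_scale)
    have Lsum: "L (\<Sum>j\<in>J. X j) = (\<Sum>j\<in>J. L (X j))" for J X
      by (rule additive_sum) (rule Ladd)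
    have L0: "L 0 = 0" using Ladd[of 0 0] by simp
    have Lkb: "cmod (L (ket_bra w)) \<le> 2 * R * norm w ^ 2" for w
    proof (cases "w = 0")
      case True
      have "ket_bra w = 0" using True by (simp add: ket_bra_def vec_eq_iff)
      then show ?thesis using True L0 by simp
    next
      case False
      define p where "p = (1 / norm w) *\<^sub>R w"
      have pn: "norm p = 1" using False unfolding p_def by simp
      have "w = norm w *\<^sub>R p" using False unfolding p_def by simp
      then have "ket_bra w = cscale_mat (of_real (norm w ^ 2)) (ket_bra p)"
        by (metis ket_bra_scale)
      then have "L (ket_bra w) = of_real (norm w ^ 2) * L (ket_bra p)" by (simp add: Lscale)
      then have "cmod (L (ket_bra w)) = norm w ^ 2 * cmod (L (ket_bra p))"
        by (simp only: norm_mult norm_of_real abs_of_nonneg zero_le_power2)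
      also have "\<dots> \<le> norm w ^ 2 * (2 * sqrt (1 - Re (ci p (T (ket_bra p) *v p))))"
        using fvdg(1)[OF ch e orth one pn] unfolding L_def by (intro mult_left_mono) auto
      also have "\<dots> \<le> norm w ^ 2 * (2 * R)"
        using Rup[OF pn] by (intro mult_left_mono) auto
      finally show ?thesis by (simp add: mult_ac)
    qed
    have "trace_norm Z = Re (Phi f e Z)"
      unfolding tnZ Phi_def Re_sum using fZ by (intro sum.cong refl) simp
    also have "\<dots> \<le> cmod (L \<rho>)" unfolding L_def Z_def by (rule complex_Re_le_cmod)
    finally have tZ: "trace_norm Z \<le> cmod (L \<rho>)" .
    obtain a s b where a: "onb a" and s0: "\<And>j. 0 \<le> s j" and tnr: "trace_norm \<rho> = (\<Sum>j<?N. s j)"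
      and rab: "\<And>j. j < ?N \<Longrightarrow> \<rho> *v a j = s j *\<^sub>R b j"
      and bone: "\<And>j. j < ?N \<Longrightarrow> b j = 0 \<or> ci (b j) (b j) = 1"
      using svd[of \<rho>] by metis
    define w where "w j m = b j + \<i>^m *s a j" for j m
    have rho_exp: "\<rho> = (\<Sum>j<?N. cscale_mat (of_real (s j)) (\<Sum>m<4. cscale_mat (\<i>^m / 4) (ket_bra (w j m))))"
    proof -
      have "\<rho> = (\<Sum>j<?N. outer (\<rho> *v a j) (a j))" by (rule onb_matrix[OF a])
      also have "\<dots> = (\<Sum>j<?N. cscale_mat (of_real (s j)) (outer (b j) (a j)))"
        by (intro sum.cong refl) (simp add: rab outer_scaleR)
      also have "\<dots> = (\<Sum>j<?N. cscale_mat (of_real (s j)) (\<Sum>m<4. cscale_mat (\<i>^m / 4) (ket_bra (w j m))))"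
        unfolding w_def by (simp only: polar)
      finally show ?thesis .
    qed
    have Lrho: "L \<rho> = (\<Sum>j<?N. of_real (s j) * (\<Sum>m<4. (\<i>^m / 4) * L (ket_bra (w j m))))"
      by (subst rho_exp) (simp add: Lsum Lscale)
    have na: "norm (a j) = 1" if "j < ?N" for j
    proof -
      have "ci (a j) (a j) = 1" using onb_orth[OF a that that] by simp
      then have "norm (a j) ^ 2 = 1" using ci_self_Re[of "a j"] by simp
      then show ?thesis using norm_ge_zero[of "a j"] by (auto simp: power2_eq_1_iff)
    qed
    have nb: "norm (b j) ^ 2 \<le> 1" if "j < ?N" for j
      using bone[OF that] ci_self_Re[of "b j"] by auto
    have perj: "cmod (\<Sum>m<4. (\<i>^m / 4) * L (ket_bra (w j m))) \<le> 4 * R" if j: "j < ?N" for j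
    proof -
      have "cmod (\<Sum>m<4. (\<i>^m / 4) * L (ket_bra (w j m))) \<le> (\<Sum>m<4. cmod ((\<i>^m / 4) * L (ket_bra (w j m))))"
        by (rule norm_sum)
      also have "\<dots> = (\<Sum>m<4. (1/4) * cmod (L (ket_bra (w j m))))"
        by (intro sum.cong refl) (simp add: norm_mult norm_divide norm_power)
      also have "\<dots> \<le> (\<Sum>m<4. (1/4) * (2 * R * norm (w j m) ^ 2))"
        by (intro sum_mono mult_left_mono Lkb) auto
      also have "\<dots> = R / 2 * (\<Sum>m<4. norm (w j m) ^ 2)"
        by (simp add: sum_distrib_left)
      also have "(\<Sum>m<4. norm (w j m) ^ 2) = 4 * (norm (a j) ^ 2 + norm (b j) ^ 2)"
        unfolding w_def by (rule norm_sum4)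
      also have "R / 2 * (4 * (norm (a j) ^ 2 + norm (b j) ^ 2)) \<le> R / 2 * (4 * 2)"
        using R0 na[OF j] nb[OF j] by (intro mult_left_mono) auto
      finally show ?thesis by simp
    qed
    have "cmod (L \<rho>) \<le> (\<Sum>j<?N. s j * cmod (\<Sum>m<4. (\<i>^m / 4) * L (ket_bra (w j m))))"
      unfolding Lrho using s0 by (simp add: order.trans[OF norm_sum] norm_mult)
    also have "\<dots> \<le> (\<Sum>j<?N. s j * (4 * R))"
      using s0 perj by (intro sum_mono mult_left_mono) auto
    also have "\<dots> = (4 * R) * trace_norm \<rho>" unfolding tnr sum_distrib_right[symmetric] by (simp only: mult.commute)
    also have "\<dots> \<le> 4 * R" using tr R0 by (simp add: mult_left_le)
    finally show ?thesis using tZ unfolding Z_def by simp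
  qed
  have tn0: "trace_norm (0::complex^'n^'n) \<le> 1"
  proof -
    obtain e \<sigma> f where tn: "trace_norm (0::complex^'n^'n) = (\<Sum>j<?N. \<sigma> j)"
      and fZ: "\<And>j. j < ?N \<Longrightarrow> ci (f j) ((0::complex^'n^'n) *v e j) = of_real (\<sigma> j)"
      using svd[of "0::complex^'n^'n"] by metis
    have "\<sigma> j = 0" if "j < ?N" for j using fZ[OF that] by simp
    then show ?thesis unfolding tn by simp
  qed
  show ?thesis unfolding superop_norm_def Q_def[symmetric] R_def[symmetric]
    by (rule cSup_least) (use tn0 main in auto)
qed

end
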